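(* Let $0<\varepsilon\le 1$, $\gamma>1$, and consider the auxiliary (non-stiff) system $U_t+\nabla\cdot\hat F(U)=0$ in $\mathbb R^d$, where $U=(\rho,\rho\mathbf u,\rho E)$ and $$\hat F(U)=\begin{pmatrix}\rho\mathbf u\\ \rho\mathbf u\otimes\mathbf u+p\,\mathrm{Id}\\ (\rho E+\Pi)\mathbf u\end{pmatrix},\qquad \Pi=\varepsilon^2p+(1-\varepsilon^2)p_\infty,\quad p_\infty(t)=\inf_{\mathbf x}p(\mathbf x,t),$$ with $p=(\gamma-1)\big(\rho E-\tfrac{\varepsilon^2}{2}\rho\|\mathbf u\|^2\big)$. Suppose the data $(\rho,\mathbf u,p)$ at time $t$ are well prepared, i.e. $\nabla\cdot\mathbf u(\mathbf x,t)=0$ and $\nabla p(\mathbf x,t)=0$. Then the solution of the auxiliary system at time $t+\Delta t$ satisfies $$\nabla\cdot\mathbf u(\mathbf x,t+\Delta t)=\mathcal O(\Delta t),\qquad \nabla p(\mathbf x,t+\Delta t)=\mathcal O(\Delta t^2).$$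
   Context: The auxiliary system is the non-stiff part of Klein's splitting $F=\hat F+\tilde F$ of the nondimensionalised compressible Euler flux $F(U)=(\rho\mathbf u,\rho\mathbf u\otimes\mathbf u+\frac{p}{\varepsilon^2}\mathrm{Id},(\rho E+p)\mathbf u)$, where $\varepsilon$ is the reference Mach number, $\rho$ density, $\mathbf u$ velocity, $E$ total specific energy, $p$ pressure. Solutions are assumed smooth so that Taylor expansion in time is valid. *)

theory Defs
  imports "HOL-Analysis.Analysis" "HOL-Library.Landau_Symbols"
begin

definition dx :: "'d::finite \<Rightarrow> (real^'d \<Rightarrow> real \<Rightarrow> real) \<Rightarrow> real^'d \<Rightarrow> real \<Rightarrow> real" where
  "dx i f x s = deriv (\<lambda>h. f (x + h *\<^sub>R axis i 1) s) 0"

definition dt :: "(real^'d \<Rightarrow> real \<Rightarrow> real) \<Rightarrow> real^'d \<Rightarrow> real \<Rightarrow> real" where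
  "dt f x s = deriv (\<lambda>r. f x r) s"

fun iter_partial :: "'d::finite option list \<Rightarrow> (real^'d \<Rightarrow> real \<Rightarrow> real) \<Rightarrow> real^'d \<Rightarrow> real \<Rightarrow> real" where
  "iter_partial [] f = f"
| "iter_partial (None # ds) f = dt (iter_partial ds f)"
| "iter_partial (Some i # ds) f = dx i (iter_partial ds f)"

definition smooth_on :: "real set \<Rightarrow> (real^'d::finite \<Rightarrow> real \<Rightarrow> real) \<Rightarrow> bool" where
  "smooth_on I f \<longleftrightarrow> (\<forall>ds x s. s \<in> I \<longrightarrow>
      (\<lambda>z. iter_partial ds f (fst z) (snd z)) differentiable (at (x, s)))"

definition div_field :: "(real^'d::finite \<Rightarrow> real \<Rightarrow> real^'d) \<Rightarrow> real^'d \<Rightarrow> real \<Rightarrow> real" where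
  "div_field u x s = (\<Sum>j\<in>UNIV. dx j (\<lambda>y r. u y r $ j) x s)"

definition grad :: "(real^'d::finite \<Rightarrow> real \<Rightarrow> real) \<Rightarrow> real^'d \<Rightarrow> real \<Rightarrow> real^'d" where
  "grad f x s = (\<chi> i. dx i f x s)"

text \<open>Total energy \<open>\<rho>E\<close> from the equation of state
  \<open>p = (\<gamma>-1)(\<rho>E - \<epsilon>^2/2 \<rho>|u|^2)\<close>.\<close>
definition rhoE :: "real \<Rightarrow> real \<Rightarrow> (real^'d::finite \<Rightarrow> real \<Rightarrow> real) \<Rightarrow>
    (real^'d \<Rightarrow> real \<Rightarrow> real^'d) \<Rightarrow> (real^'d \<Rightarrow> real \<Rightarrow> real) \<Rightarrow> real^'d \<Rightarrow> real \<Rightarrow> real" where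
  "rhoE \<gamma> \<epsilon> \<rho> u p x s = p x s / (\<gamma> - 1) + \<epsilon>\<^sup>2 / 2 * \<rho> x s * (norm (u x s))\<^sup>2"

definition p_inf :: "(real^'d::finite \<Rightarrow> real \<Rightarrow> real) \<Rightarrow> real \<Rightarrow> real" where
  "p_inf p s = Inf (range (\<lambda>y. p y s))"

definition Pi_aux :: "real \<Rightarrow> (real^'d::finite \<Rightarrow> real \<Rightarrow> real) \<Rightarrow> real^'d \<Rightarrow> real \<Rightarrow> real" where
  "Pi_aux \<epsilon> p x s = \<epsilon>\<^sup>2 * p x s + (1 - \<epsilon>\<^sup>2) * p_inf p s"

definition aux_system :: "real \<Rightarrow> real \<Rightarrow> real set \<Rightarrow> (real^'d::finite \<Rightarrow> real \<Rightarrow> real) \<Rightarrow>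
    (real^'d \<Rightarrow> real \<Rightarrow> real^'d) \<Rightarrow> (real^'d \<Rightarrow> real \<Rightarrow> real) \<Rightarrow> bool" where
  "aux_system \<gamma> \<epsilon> I \<rho> u p \<longleftrightarrow> (\<forall>x. \<forall>s\<in>I.
     dt \<rho> x s + (\<Sum>j\<in>UNIV. dx j (\<lambda>y r. \<rho> y r * u y r $ j) x s) = 0
   \<and> (\<forall>i. dt (\<lambda>y r. \<rho> y r * u y r $ i) x s
          + (\<Sum>j\<in>UNIV. dx j (\<lambda>y r. \<rho> y r * u y r $ i * u y r $ j) x s)
          + dx i p x s = 0)
   \<and> dt (rhoE \<gamma> \<epsilon> \<rho> u p) x s
       + (\<Sum>j\<in>UNIV. dx j (\<lambda>y r. (rhoE \<gamma> \<epsilon> \<rho> u p y r + Pi_aux \<epsilon> p y r) * u y r $ j) x s) = 0)"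

end

theory Submission
  imports Defs
begin

lemma iter_partial_append: "iter_partial (xs @ ys) f = iter_partial xs (iter_partial ys f)"
  proof (induction xs arbitrary: f)
  case (Cons a xs) thus ?case by (cases a) auto
qed simp

lemma smooth_iter: "smooth_on I f \<Longrightarrow> smooth_on I (iter_partial ds f)"
  unfolding smooth_on_def by (metis iter_partial_append)

lemma smooth_dx: "smooth_on I f \<Longrightarrow> smooth_on I (dx i f)"
  using smooth_iter[of I f "[Some i]"] by simp

lemma smooth_dt: "smooth_on I f \<Longrightarrow> smooth_on I (dt f)"
  using smooth_iter[of I f "[None]"] by simp

lemma smooth_diff: "smooth_on I f \<Longrightarrow> s \<in> I \<Longrightarrow> (\<lambda>z. f (fst z) (snd z)) differentiable (at (x, s))"
  unfolding smooth_on_def by (metis iter_partial.simps(1))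

lemma L1:
  assumes "smooth_on I f" "s \<in> I"
  shows "((\<lambda>h. f (y + h *\<^sub>R axis i 1) s) has_real_derivative dx i f (y + h0 *\<^sub>R axis i 1) s) (at h0)"
proof -
  let ?F = "\<lambda>h. f (y + h *\<^sub>R axis i 1) s"
  have "((\<lambda>h. (y + h *\<^sub>R axis i 1, s)) has_derivative (\<lambda>h. (h *\<^sub>R axis i 1, 0))) (at h0)"
    by (auto intro!: derivative_eq_intros)
  hence "(\<lambda>h. (y + h *\<^sub>R axis i 1, s)) differentiable (at h0)"
    unfolding differentiable_def by blast
  moreover have "(\<lambda>z. f (fst z) (snd z)) differentiable (at (y + h0 *\<^sub>R axis i 1, s))"
    using smooth_diff[OF assms] .
  ultimately have "((\<lambda>z. f (fst z) (snd z)) \<circ> (\<lambda>h. (y + h *\<^sub>R axis i 1, s))) differentiable (at h0)"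
    using differentiable_chain_at by fastforce
  hence "?F differentiable (at h0)" by (simp add: o_def)
  hence D: "(?F has_real_derivative deriv ?F h0) (at h0)"
    using DERIV_deriv_iff_real_differentiable by blast
  hence "((\<lambda>h. ?F (h + h0)) has_real_derivative deriv ?F h0) (at 0)"
    using DERIV_shift[of ?F "deriv ?F h0" 0 h0] by simp
  moreover have "(\<lambda>h. ?F (h + h0)) = (\<lambda>h. f (y + h0 *\<^sub>R axis i 1 + h *\<^sub>R axis i 1) s)"
    by (simp add: algebra_simps scaleR_add_left)
  ultimately have "dx i f (y + h0 *\<^sub>R axis i 1) s = deriv ?F h0"
    unfolding dx_def by (metis DERIV_imp_deriv)
  with D show ?thesis by simp
qed

lemma L1': "smooth_on I f \<Longrightarrow> s \<in> I \<Longrightarrow>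
   ((\<lambda>h. f (y + h *\<^sub>R axis i 1) s) has_real_derivative dx i f y s) (at 0)"
  using L1[of I f s y i 0] by simp

lemma L2:
  assumes "smooth_on I f" "r \<in> I"
  shows "((\<lambda>r. f y r) has_real_derivative dt f y r) (at r)"
proof -
  have "((\<lambda>r. (y, r)) has_derivative (\<lambda>h. (0, h))) (at r)"
    by (auto intro!: derivative_eq_intros)
  hence "(\<lambda>r. (y, r)) differentiable (at r)"
    unfolding differentiable_def by blast
  moreover have "(\<lambda>z. f (fst z) (snd z)) differentiable (at (y, r))"
    using smooth_diff[OF assms] .
  ultimately have "((\<lambda>z. f (fst z) (snd z)) \<circ> (\<lambda>r. (y, r))) differentiable (at r)"
    using differentiable_chain_at by fastforce
  hence "(\<lambda>r. f y r) differentiable (at r)" by (simp add: o_def)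
  thus ?thesis unfolding dt_def using DERIV_deriv_iff_real_differentiable by blast
qed

lemma dx_eq: "((\<lambda>h. G (y + h *\<^sub>R axis j (1::real)) s) has_real_derivative D) (at 0) \<Longrightarrow> dx j G y s = D"
  unfolding dx_def by (rule DERIV_imp_deriv)

lemma dt_eq: "((\<lambda>r. G y r) has_real_derivative D) (at s) \<Longrightarrow> dt G y s = D"
  unfolding dt_def by (rule DERIV_imp_deriv)

lemma norm_sq_sum: "(norm (v::real^'d::finite))\<^sup>2 = (\<Sum>k\<in>UNIV. (v $ k)\<^sup>2)"
  unfolding dot_square_norm[symmetric] inner_vec_def by (simp add: power2_eq_square)


lemma pt_zero:
  fixes \<gamma> \<epsilon> t :: real and I :: "real set"
    and \<rho> p :: "real^'d::finite \<Rightarrow> real \<Rightarrow> real" and u :: "real^'d \<Rightarrow> real \<Rightarrow> real^'d"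
  assumes g: "\<gamma> > 1" and tI: "t \<in> I"
    and sr: "smooth_on I \<rho>" and sp: "smooth_on I p" and su: "\<forall>i. smooth_on I (\<lambda>y r. u y r $ i)"
    and aux: "aux_system \<gamma> \<epsilon> I \<rho> u p"
    and dv: "\<forall>x. div_field u x t = 0"
    and gp: "\<forall>x. grad p x t = 0"
  shows "dt p y t = 0"
proof -
  define R where "R = \<rho> y t"
  define Uk where "Uk = (\<lambda>k. u y t $ k)"
  define Rt where "Rt = dt \<rho> y t"
  define Ut where "Ut = (\<lambda>k. dt (\<lambda>y r. u y r $ k) y t)"
  define Pt where "Pt = dt p y t"
  define Rx where "Rx = (\<lambda>j. dx j \<rho> y t)"
  define Ux where "Ux = (\<lambda>k j. dx j (\<lambda>y r. u y r $ k) y t)"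
  define N where "N = (\<Sum>k\<in>UNIV. (Uk k)\<^sup>2)"
  define M where "M = (\<Sum>j\<in>UNIV. Rx j * Uk j)"
  have Px: "dx j p y t = 0" for j
    using gp[rule_format, of y] unfolding grad_def by (metis vec_lambda_beta zero_index)
  have divz: "(\<Sum>j\<in>UNIV. Ux j j) = 0"
    using dv[rule_format, of y] unfolding div_field_def Ux_def by simp
  have hR: "((\<lambda>h. \<rho> (y + h *\<^sub>R axis j 1) t) has_real_derivative Rx j) (at 0)" for j
    unfolding Rx_def by (rule L1'[OF sr tI])
  have hU: "((\<lambda>h. u (y + h *\<^sub>R axis j 1) t $ k) has_real_derivative Ux k j) (at 0)" for j k
    unfolding Ux_def using L1'[OF su[rule_format] tI] by blast
  have hP: "((\<lambda>h. p (y + h *\<^sub>R axis j 1) t) has_real_derivative 0) (at 0)" for j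
    using L1'[OF sp tI, of y j] Px[of j] by simp
  have tR: "((\<lambda>r. \<rho> y r) has_real_derivative Rt) (at t)"
    unfolding Rt_def by (rule L2[OF sr tI])
  have tU: "((\<lambda>r. u y r $ k) has_real_derivative Ut k) (at t)" for k
    unfolding Ut_def using L2[OF su[rule_format] tI] by blast
  have tP: "((\<lambda>r. p y r) has_real_derivative Pt) (at t)"
    unfolding Pt_def by (rule L2[OF sp tI])
  have rhoE_eq: "rhoE \<gamma> \<epsilon> \<rho> u p z r = p z r / (\<gamma> - 1) + \<epsilon>\<^sup>2 / 2 * \<rho> z r * (\<Sum>k\<in>UNIV. (u z r $ k)\<^sup>2)" for z r
    unfolding rhoE_def norm_sq_sum ..
  from aux have A1: "dt \<rho> y t + (\<Sum>j\<in>UNIV. dx j (\<lambda>y r. \<rho> y r * u y r $ j) y t) = 0"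
    and A2: "\<And>i. dt (\<lambda>y r. \<rho> y r * u y r $ i) y t
          + (\<Sum>j\<in>UNIV. dx j (\<lambda>y r. \<rho> y r * u y r $ i * u y r $ j) y t)
          + dx i p y t = 0"
    and A3: "dt (rhoE \<gamma> \<epsilon> \<rho> u p) y t
       + (\<Sum>j\<in>UNIV. dx j (\<lambda>y r. (rhoE \<gamma> \<epsilon> \<rho> u p y r + Pi_aux \<epsilon> p y r) * u y r $ j) y t) = 0"
    unfolding aux_system_def using tI by blast+
  have m1: "dx j (\<lambda>y r. \<rho> y r * u y r $ j) y t = Rx j * Uk j + R * Ux j j" for j
    unfolding R_def Uk_def
    by (rule dx_eq) (auto intro!: derivative_eq_intros hR hU)
  have m2: "dx j (\<lambda>y r. \<rho> y r * u y r $ i * u y r $ j) y t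
        = (Rx j * Uk i + R * Ux i j) * Uk j + R * Uk i * Ux j j" for i j
    unfolding R_def Uk_def
    by (rule dx_eq) (auto intro!: derivative_eq_intros hR hU simp: algebra_simps)
  have m3: "dt (\<lambda>y r. \<rho> y r * u y r $ i) y t = Rt * Uk i + R * Ut i" for i
    unfolding R_def Uk_def
    by (rule dt_eq) (auto intro!: derivative_eq_intros tR tU)
  define SS where "SS = (\<lambda>r. \<Sum>k\<in>UNIV. (u y r $ k)\<^sup>2)"
  define NT where "NT = (\<Sum>k\<in>UNIV. 2 * Uk k * Ut k)"
  have hN: "(SS has_real_derivative NT) (at t)"
    unfolding Uk_def SS_def NT_def
    apply (rule derivative_eq_intros tU)+
    apply (rule refl)
    apply (rule sum.cong; simp)
    done
  have g1: "\<gamma> \<noteq> 1" using g by simp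
  have e1: "dt (rhoE \<gamma> \<epsilon> \<rho> u p) y t = Pt / (\<gamma> - 1) + \<epsilon>\<^sup>2 / 2 * (Rt * N + R * NT)"
  proof -
    have "rhoE \<gamma> \<epsilon> \<rho> u p y r = p y r / (\<gamma> - 1) + \<epsilon>\<^sup>2 / 2 * \<rho> y r * SS r" for r
      unfolding rhoE_eq SS_def ..
    moreover have "N = SS t" unfolding N_def SS_def Uk_def ..
    moreover have "((\<lambda>r. p y r / (\<gamma> - 1) + \<epsilon>\<^sup>2 / 2 * \<rho> y r * SS r) has_real_derivative
        Pt / (\<gamma> - 1) + \<epsilon>\<^sup>2 / 2 * (Rt * SS t + \<rho> y t * NT)) (at t)"
    proof -
      have d1: "((\<lambda>r. p y r / (\<gamma> - 1)) has_real_derivative Pt / (\<gamma> - 1)) (at t)"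
        using DERIV_cdivide[OF tP] .
      have d2: "((\<lambda>r. \<epsilon>\<^sup>2 / 2 * \<rho> y r * SS r) has_real_derivative \<epsilon>\<^sup>2 / 2 * (Rt * SS t + \<rho> y t * NT)) (at t)"
        by (auto intro!: derivative_eq_intros tR hN simp: algebra_simps)
      show ?thesis using DERIV_add[OF d1 d2] .
    qed
    ultimately show ?thesis unfolding R_def by (intro dt_eq) simp
  qed
  define SX where "SX = (\<lambda>j h. \<Sum>k\<in>UNIV. (u (y + h *\<^sub>R axis j 1) t $ k)\<^sup>2)"
  define NX where "NX = (\<lambda>j. \<Sum>k\<in>UNIV. 2 * Uk k * Ux k j)"
  have hNx: "(SX j has_real_derivative NX j) (at 0)" for j
    unfolding Uk_def SX_def NX_def
    apply (rule derivative_eq_intros hU)+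
    apply (rule refl)
    apply (rule sum.cong; simp)
    done
  have e2: "dx j (\<lambda>y r. (rhoE \<gamma> \<epsilon> \<rho> u p y r + Pi_aux \<epsilon> p y r) * u y r $ j) y t
     = (\<epsilon>\<^sup>2 / 2 * (Rx j * N + R * NX j)) * Uk j
       + (rhoE \<gamma> \<epsilon> \<rho> u p y t + Pi_aux \<epsilon> p y t) * Ux j j" for j
  proof -
    have d1: "((\<lambda>h. p (y + h *\<^sub>R axis j 1) t / (\<gamma> - 1)) has_real_derivative 0 / (\<gamma> - 1)) (at 0)"
      using DERIV_cdivide[OF hP] .
    have d2: "((\<lambda>h. \<epsilon>\<^sup>2 / 2 * \<rho> (y + h *\<^sub>R axis j 1) t * SX j h) has_real_derivative
          \<epsilon>\<^sup>2 / 2 * (Rx j * SX j 0 + \<rho> y t * NX j)) (at 0)"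
      by (auto intro!: derivative_eq_intros hR hNx simp: algebra_simps)
    have d3: "((\<lambda>h. Pi_aux \<epsilon> p (y + h *\<^sub>R axis j 1) t) has_real_derivative 0) (at 0)"
      unfolding Pi_aux_def by (auto intro!: derivative_eq_intros hP)
    have rr: "rhoE \<gamma> \<epsilon> \<rho> u p (y + h *\<^sub>R axis j 1) t
        = p (y + h *\<^sub>R axis j 1) t / (\<gamma> - 1) + \<epsilon>\<^sup>2 / 2 * \<rho> (y + h *\<^sub>R axis j 1) t * SX j h" for h
      unfolding rhoE_eq SX_def ..
    have "N = SX j 0" unfolding N_def SX_def Uk_def by simp
    have D: "((\<lambda>h. (rhoE \<gamma> \<epsilon> \<rho> u p (y + h *\<^sub>R axis j 1) t + Pi_aux \<epsilon> p (y + h *\<^sub>R axis j 1) t)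
        * u (y + h *\<^sub>R axis j 1) t $ j) has_real_derivative
        (0 / (\<gamma> - 1) + \<epsilon>\<^sup>2 / 2 * (Rx j * SX j 0 + \<rho> y t * NX j) + 0) * u y t $ j
        + (rhoE \<gamma> \<epsilon> \<rho> u p y t + Pi_aux \<epsilon> p y t) * Ux j j) (at 0)"
      using DERIV_mult[OF DERIV_add[OF DERIV_add[OF d1 d2] d3] hU[of j j]] unfolding rr[symmetric] by (simp only: mult.commute add_0 add_0_right div_0 mult_zero_left scale_zero_left)
    show ?thesis
      apply (rule dx_eq)
      using D \<open>N = SX j 0\<close> unfolding R_def Uk_def by simp
  qed
  have mass: "Rt + M = 0"
    using A1 unfolding m1 sum.distrib M_def Rt_def
    by (simp add: sum_distrib_left[symmetric] divz)
  have mom: "R * Ut i + R * (\<Sum>j\<in>UNIV. Ux i j * Uk j) = 0" for i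
  proof -
    have "(\<Sum>j\<in>UNIV. (Rx j * Uk i + R * Ux i j) * Uk j + R * Uk i * Ux j j)
          = Uk i * M + R * (\<Sum>j\<in>UNIV. Ux i j * Uk j) + R * Uk i * (\<Sum>j\<in>UNIV. Ux j j)"
      unfolding M_def by (simp add: sum.distrib sum_distrib_left algebra_simps)
    hence "(\<Sum>j\<in>UNIV. (Rx j * Uk i + R * Ux i j) * Uk j + R * Uk i * Ux j j)
          = Uk i * M + R * (\<Sum>j\<in>UNIV. Ux i j * Uk j)" unfolding divz by simp
    with A2[of i] have "Rt * Uk i + R * Ut i + (Uk i * M + R * (\<Sum>j\<in>UNIV. Ux i j * Uk j)) = 0"
      unfolding m2 m3 Px by simp
    moreover have "Rt * Uk i + Uk i * M = Uk i * (Rt + M)" by (simp add: algebra_simps)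
    ultimately show ?thesis using mass by simp
  qed
  have S: "(\<Sum>j\<in>UNIV. (\<epsilon>\<^sup>2 / 2 * (Rx j * N + R * NX j)) * Uk j)
     = \<epsilon>\<^sup>2 / 2 * N * M + \<epsilon>\<^sup>2 * (\<Sum>k\<in>UNIV. Uk k * (R * (\<Sum>j\<in>UNIV. Ux k j * Uk j)))"
  proof -
    have "(\<Sum>j\<in>UNIV. (\<epsilon>\<^sup>2 / 2 * (Rx j * N + R * NX j)) * Uk j)
      = (\<Sum>j\<in>UNIV. \<epsilon>\<^sup>2 / 2 * N * (Rx j * Uk j)) + (\<Sum>j\<in>UNIV. \<Sum>k\<in>UNIV. \<epsilon>\<^sup>2 * (Uk k * (R * (Ux k j * Uk j))))"
    proof -
      have inner: "(\<Sum>k\<in>UNIV. \<epsilon>\<^sup>2 * (Uk k * (R * (Ux k j * Uk j)))) = \<epsilon>\<^sup>2 / 2 * R * NX j * Uk j" for j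
        unfolding NX_def sum_distrib_left sum_distrib_right
        by (rule sum.cong) (simp_all add: algebra_simps)
      show ?thesis unfolding inner sum.distrib[symmetric]
        by (rule sum.cong) (simp_all add: algebra_simps)
    qed
    also have "(\<Sum>j\<in>UNIV. \<Sum>k\<in>UNIV. \<epsilon>\<^sup>2 * (Uk k * (R * (Ux k j * Uk j))))
       = (\<Sum>k\<in>UNIV. \<Sum>j\<in>UNIV. \<epsilon>\<^sup>2 * (Uk k * (R * (Ux k j * Uk j))))"
      by (rule sum.swap)
    finally show ?thesis unfolding M_def by (simp add: sum_distrib_left)
  qed
  define T where "T = (\<Sum>k\<in>UNIV. Uk k * (R * Ut k))"
  define K where "K = (\<Sum>k\<in>UNIV. Uk k * (R * (\<Sum>j\<in>UNIV. Ux k j * Uk j)))"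
  have RNT: "R * NT = 2 * T" unfolding NT_def T_def sum_distrib_left
    by (rule sum.cong) (simp_all add: algebra_simps)
  have TK: "T + K = 0"
  proof -
    have "T + K = (\<Sum>k\<in>UNIV. Uk k * (R * Ut k + R * (\<Sum>j\<in>UNIV. Ux k j * Uk j)))"
      unfolding T_def K_def sum.distrib[symmetric] by (simp add: distrib_left)
    also have "\<dots> = 0" using mom by simp
    finally show ?thesis .
  qed
  have E3: "(\<Sum>j\<in>UNIV. (\<epsilon>\<^sup>2 / 2 * (Rx j * N + R * NX j)) * Uk j
       + (rhoE \<gamma> \<epsilon> \<rho> u p y t + Pi_aux \<epsilon> p y t) * Ux j j)
      = \<epsilon>\<^sup>2 / 2 * N * M + \<epsilon>\<^sup>2 * K"
    unfolding sum.distrib S K_def sum_distrib_left[symmetric] divz by simp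
  have "Pt / (\<gamma> - 1) + (\<epsilon>\<^sup>2 / 2 * (Rt * N + 2 * T) + (\<epsilon>\<^sup>2 / 2 * N * M + \<epsilon>\<^sup>2 * K)) = 0"
    using A3 unfolding e1 e2 E3 RNT by simp
  moreover have "\<epsilon>\<^sup>2 / 2 * (Rt * N + 2 * T) + (\<epsilon>\<^sup>2 / 2 * N * M + \<epsilon>\<^sup>2 * K)
     = \<epsilon>\<^sup>2 / 2 * N * (Rt + M) + \<epsilon>\<^sup>2 * (T + K)"
    by (simp add: field_simps)
  ultimately have "Pt / (\<gamma> - 1) = 0" using mass TK by simp
  thus ?thesis using g unfolding Pt_def by simp
qed


lemma L2s: "smooth_on I f \<Longrightarrow> t + b \<in> I \<Longrightarrow>
  ((\<lambda>b. f y (t + b)) has_real_derivative dt f y (t + b)) (at b)"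
  using L2[of I f "t + b" y] DERIV_shift[of "\<lambda>r. f y r" "dt f y (t + b)" b t]
  by (simp add: add.commute)

lemma MVT0:
  assumes "\<And>z. \<bar>z\<bar> \<le> \<bar>k\<bar> \<Longrightarrow> (f has_real_derivative f' z) (at z)"
  shows "\<exists>\<eta>. \<bar>\<eta>\<bar> \<le> \<bar>k\<bar> \<and> f k - f 0 = k * f' \<eta>"
proof (cases "k = 0")
  case True thus ?thesis by auto
next
  case False
  show ?thesis
  proof (cases "k > 0")
    case True
    have "\<And>z. 0 \<le> z \<Longrightarrow> z \<le> k \<Longrightarrow> (f has_real_derivative f' z) (at z)"
      using assms True by simp
    from MVT2[of 0 k f f', OF True this] obtain z where "0 < z" "z < k" "f k - f 0 = (k - 0) * f' z"
      by blast
    thus ?thesis by (intro exI[of _ z]) auto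
  next
    case neg: False
    with False have "k < 0" by simp
    have "\<And>z. k \<le> z \<Longrightarrow> z \<le> 0 \<Longrightarrow> (f has_real_derivative f' z) (at z)"
      using assms \<open>k < 0\<close> by simp
    from MVT2[of k 0 f f', OF \<open>k < 0\<close> this] obtain z where "k < z" "z < 0" "f 0 - f k = (0 - k) * f' z"
      by blast
    thus ?thesis by (intro exI[of _ z]) (auto simp: algebra_simps)
  qed
qed

lemma O1:
  fixes f :: "real \<Rightarrow> real"
  assumes "(f has_real_derivative D) (at 0)" "f 0 = 0"
  shows "f \<in> O[at 0](\<lambda>h. h)"
proof -
  have "((\<lambda>y. (f y - f 0) / (y - 0)) \<longlongrightarrow> D) (at 0)"
    using assms(1) has_field_derivative_iff by blast
  hence "\<forall>\<^sub>F y in at 0. dist ((f y - f 0) / (y - 0)) D < 1"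
    using tendstoD by force
  moreover have "\<forall>\<^sub>F y in at (0::real). y \<noteq> 0" by (simp add: eventually_at_filter)
  ultimately have "\<forall>\<^sub>F y in at (0::real). norm (f y) \<le> (\<bar>D\<bar> + 1) * norm y"
  proof (eventually_elim)
    case (elim y)
    hence "\<bar>f y / y - D\<bar> < 1" using assms(2) by (simp add: dist_real_def)
    hence "\<bar>f y / y\<bar> \<le> \<bar>D\<bar> + 1" by linarith
    hence "\<bar>f y\<bar> / \<bar>y\<bar> \<le> \<bar>D\<bar> + 1" by (simp add: abs_divide)
    thus ?case using elim(2) by (simp add: divide_le_eq)
  qed
  thus ?thesis by (rule bigoI)
qed


lemma grad_bound:
  fixes p :: "real^'d::finite \<Rightarrow> real \<Rightarrow> real"
  assumes oI: "open I" and tI: "t \<in> I" and sp: "smooth_on I p"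
    and pt0: "\<And>y. dt p y t = 0" and g0: "dx i p x t = 0"
  shows "\<exists>M. \<forall>\<^sub>F k in at 0. \<bar>dx i p x (t + k)\<bar> \<le> M * k\<^sup>2"
proof -
  define e where "e = axis i (1::real)"
  define F1 where "F1 = dt p"
  define F2 where "F2 = dx i F1"
  define F3 where "F3 = dt F2"
  have s1: "smooth_on I F1" unfolding F1_def by (rule smooth_dt[OF sp])
  have s2: "smooth_on I F2" unfolding F2_def by (rule smooth_dx[OF s1])
  have s3: "smooth_on I F3" unfolding F3_def by (rule smooth_dt[OF s2])
  have "continuous (at (x, t)) (\<lambda>z. F3 (fst z) (snd z))"
    using smooth_diff[OF s3 tI] differentiable_imp_continuous_within by blast
  then obtain d1 where d1: "d1 > 0" "\<And>z. dist z (x, t) < d1 \<Longrightarrow> dist (F3 (fst z) (snd z)) (F3 x t) < 1"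
    unfolding continuous_at_eps_delta by (metis fst_conv snd_conv zero_less_one)
  obtain d2 where d2: "d2 > 0" "ball t d2 \<subseteq> I" using oI tI open_contains_ball by blast
  define r where "r = min d1 d2 / 3"
  have r: "r > 0" "2 * r < d1" "r < d2" using d1 d2 unfolding r_def by auto
  define M where "M = \<bar>F3 x t\<bar> + 1"
  have inI: "t + b \<in> I" if "\<bar>b\<bar> < r" for b
    using that r d2 by (auto simp: dist_real_def subset_iff)
  have F3b: "\<bar>F3 (x + a *\<^sub>R e) (t + b)\<bar> \<le> M" if "\<bar>a\<bar> < r" "\<bar>b\<bar> < r" for a b
  proof -
    have "dist (x + a *\<^sub>R e, t + b) (x, t) \<le> norm (a *\<^sub>R e) + norm b"
      using norm_Pair_le[of "a *\<^sub>R e" b] by (simp add: dist_norm)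
    also have "\<dots> = \<bar>a\<bar> + \<bar>b\<bar>" unfolding e_def by simp
    finally have "dist (x + a *\<^sub>R e, t + b) (x, t) < d1" using that r by linarith
    from d1(2)[OF this] show ?thesis unfolding M_def dist_real_def by simp
  qed
  have F2t: "F2 z t = 0" for z
    unfolding F2_def F1_def dx_def pt0 by simp
  have key: "\<bar>(p (x + h *\<^sub>R e) (t + k) - p x (t + k)) - (p (x + h *\<^sub>R e) t - p x t)\<bar> \<le> \<bar>h\<bar> * (M * k\<^sup>2)"
    if hk: "\<bar>h\<bar> < r" "\<bar>k\<bar> < r" for h k
  proof -
    define \<psi> where "\<psi> = (\<lambda>b. p (x + h *\<^sub>R e) (t + b) - p x (t + b))"
    have "\<exists>\<eta>. \<bar>\<eta>\<bar> \<le> \<bar>k\<bar> \<and> \<psi> k - \<psi> 0 = k * (F1 (x + h *\<^sub>R e) (t + \<eta>) - F1 x (t + \<eta>))"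
      unfolding \<psi>_def F1_def
      by (rule MVT0, rule DERIV_diff; rule L2s[OF sp inI]) (use hk in auto)
    then obtain \<eta> where \<eta>: "\<bar>\<eta>\<bar> \<le> \<bar>k\<bar>" "\<psi> k - \<psi> 0 = k * (F1 (x + h *\<^sub>R e) (t + \<eta>) - F1 x (t + \<eta>))"
      by blast
    have \<eta>r: "\<bar>\<eta>\<bar> < r" using \<eta> hk by linarith
    have "\<exists>\<xi>. \<bar>\<xi>\<bar> \<le> \<bar>h\<bar> \<and> F1 (x + h *\<^sub>R e) (t + \<eta>) - F1 (x + 0 *\<^sub>R e) (t + \<eta>) = h * F2 (x + \<xi> *\<^sub>R e) (t + \<eta>)"
      unfolding F2_def e_def
      by (rule MVT0[where f = "\<lambda>a. F1 (x + a *\<^sub>R axis i 1) (t + \<eta>)"], rule L1[OF s1 inI[OF \<eta>r]])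
    then obtain \<xi> where \<xi>: "\<bar>\<xi>\<bar> \<le> \<bar>h\<bar>" "F1 (x + h *\<^sub>R e) (t + \<eta>) - F1 x (t + \<eta>) = h * F2 (x + \<xi> *\<^sub>R e) (t + \<eta>)"
      by auto
    have \<xi>r: "\<bar>\<xi>\<bar> < r" using \<xi> hk by linarith
    have "\<exists>\<eta>'. \<bar>\<eta>'\<bar> \<le> \<bar>\<eta>\<bar> \<and> F2 (x + \<xi> *\<^sub>R e) (t + \<eta>) - F2 (x + \<xi> *\<^sub>R e) (t + 0) = \<eta> * F3 (x + \<xi> *\<^sub>R e) (t + \<eta>')"
      unfolding F3_def
      by (rule MVT0[where f = "\<lambda>b. F2 (x + \<xi> *\<^sub>R e) (t + b)"], rule L2s[OF s2 inI]) (use \<eta>r in auto)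
    then obtain \<eta>' where \<eta>': "\<bar>\<eta>'\<bar> \<le> \<bar>\<eta>\<bar>" "F2 (x + \<xi> *\<^sub>R e) (t + \<eta>) = \<eta> * F3 (x + \<xi> *\<^sub>R e) (t + \<eta>')"
      using F2t by auto
    have "\<bar>F3 (x + \<xi> *\<^sub>R e) (t + \<eta>')\<bar> \<le> M" using F3b[OF \<xi>r] \<eta>' \<eta>r by auto
    have "(p (x + h *\<^sub>R e) (t + k) - p x (t + k)) - (p (x + h *\<^sub>R e) t - p x t)
         = k * (h * (\<eta> * F3 (x + \<xi> *\<^sub>R e) (t + \<eta>')))"
      using \<eta>(2) \<xi>(2) \<eta>'(2) unfolding \<psi>_def by simp
    also have "\<bar>\<dots>\<bar> = \<bar>h\<bar> * (\<bar>k\<bar> * \<bar>\<eta>\<bar> * \<bar>F3 (x + \<xi> *\<^sub>R e) (t + \<eta>')\<bar>)"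
      by (simp add: abs_mult)
    also have "\<dots> \<le> \<bar>h\<bar> * (\<bar>k\<bar> * \<bar>k\<bar> * M)"
      by (intro mult_left_mono mult_mono) (use \<eta> \<open>\<bar>F3 (x + \<xi> *\<^sub>R e) (t + \<eta>')\<bar> \<le> M\<close> in auto)
    also have "\<dots> = \<bar>h\<bar> * (M * k\<^sup>2)" by (simp add: power2_eq_square abs_mult_self_eq)
    finally show ?thesis .
  qed
  have "\<bar>dx i p x (t + k)\<bar> \<le> M * k\<^sup>2" if kr: "\<bar>k\<bar> < r" for k
  proof -
    have lk: "((\<lambda>h. (p (x + h *\<^sub>R e) (t + k) - p (x + 0 *\<^sub>R e) (t + k)) / (h - 0)) \<longlongrightarrow> dx i p x (t + k)) (at 0)"
      using L1'[OF sp inI[OF kr], of x i] unfolding has_field_derivative_iff e_def by simp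
    have l0: "((\<lambda>h. (p (x + h *\<^sub>R e) t - p (x + 0 *\<^sub>R e) t) / (h - 0)) \<longlongrightarrow> dx i p x t) (at 0)"
      using L1'[OF sp tI, of x i] unfolding has_field_derivative_iff e_def by simp
    have lim: "((\<lambda>h. \<bar>(p (x + h *\<^sub>R e) (t + k) - p x (t + k)) / h - (p (x + h *\<^sub>R e) t - p x t) / h\<bar>)
        \<longlongrightarrow> \<bar>dx i p x (t + k) - dx i p x t\<bar>) (at 0)"
      using tendsto_rabs[OF tendsto_diff[OF lk l0]] by simp
    have evh: "\<bar>(p (x + h *\<^sub>R e) (t + k) - p x (t + k)) / h - (p (x + h *\<^sub>R e) t - p x t) / h\<bar> \<le> M * k\<^sup>2"
      if h: "h \<noteq> 0" "\<bar>h\<bar> < r" for h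
    proof -
      have "\<bar>(p (x + h *\<^sub>R e) (t + k) - p x (t + k)) / h - (p (x + h *\<^sub>R e) t - p x t) / h\<bar>
          = \<bar>(p (x + h *\<^sub>R e) (t + k) - p x (t + k)) - (p (x + h *\<^sub>R e) t - p x t)\<bar> / \<bar>h\<bar>"
        by (simp add: diff_divide_distrib[symmetric] abs_divide)
      also have "\<dots> \<le> \<bar>h\<bar> * (M * k\<^sup>2) / \<bar>h\<bar>"
        by (rule divide_right_mono[OF key[OF h(2) kr]]) simp
      also have "\<dots> = M * k\<^sup>2" using h by simp
      finally show ?thesis .
    qed
    have ev: "\<forall>\<^sub>F h in at (0::real). \<bar>(p (x + h *\<^sub>R e) (t + k) - p x (t + k)) / h - (p (x + h *\<^sub>R e) t - p x t) / h\<bar> \<le> M * k\<^sup>2"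
      unfolding eventually_at using r evh by (auto simp: dist_real_def)
    have "\<bar>dx i p x (t + k) - dx i p x t\<bar> \<le> M * k\<^sup>2"
      by (rule tendsto_upperbound[OF lim ev]) simp
    thus ?thesis using g0 by simp
  qed
  hence "\<forall>\<^sub>F k in at 0. \<bar>dx i p x (t + k)\<bar> \<le> M * k\<^sup>2"
    unfolding eventually_at using r by (auto simp: dist_real_def)
  thus ?thesis by blast
qed


theorem proposition2p1:
  fixes \<gamma> \<epsilon> t :: real and I :: "real set"
    and \<rho> p :: "real^'d::finite \<Rightarrow> real \<Rightarrow> real" and u :: "real^'d \<Rightarrow> real \<Rightarrow> real^'d"
  assumes "0 < \<epsilon>" "\<epsilon> \<le> 1" "\<gamma> > 1"
    and "open I" "t \<in> I"
    and "smooth_on I \<rho>" "smooth_on I p" "\<forall>i. smooth_on I (\<lambda>y r. u y r $ i)"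
    and "aux_system \<gamma> \<epsilon> I \<rho> u p"
    and "\<forall>x. div_field u x t = 0"
    and "\<forall>x. grad p x t = 0"
  shows "\<forall>x. (\<lambda>h. div_field u x (t + h)) \<in> O[at 0](\<lambda>h. h)
            \<and> (\<lambda>h. norm (grad p x (t + h))) \<in> O[at 0](\<lambda>h. h\<^sup>2)"
proof
  fix x
  have pt0: "\<And>y. dt p y t = 0"
    using pt_zero[OF assms(3,5,6,7,8,9,10,11)] by blast
  have g0: "dx i p x t = 0" for i
    using assms(11)[rule_format, of x] unfolding grad_def by (metis vec_lambda_beta zero_index)
  have tI0: "t + 0 \<in> I" using assms(5) by simp
  have "((\<lambda>h. div_field u x (t + h)) has_real_derivative
      (\<Sum>j\<in>UNIV. dt (dx j (\<lambda>y r. u y r $ j)) x (t + 0))) (at 0)"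
    unfolding div_field_def
    by (rule DERIV_sum, rule L2s[OF smooth_dx[OF assms(8)[rule_format]] tI0])
  hence A: "(\<lambda>h. div_field u x (t + h)) \<in> O[at 0](\<lambda>h. h)"
    by (rule O1) (use assms(10) in simp)
  have "\<forall>i. \<exists>M. \<forall>\<^sub>F k in at 0. \<bar>dx i p x (t + k)\<bar> \<le> M * k\<^sup>2"
    using grad_bound[OF assms(4,5,7) pt0 g0] by blast
  then obtain Mf where Mf: "\<And>i. \<forall>\<^sub>F k in at 0. \<bar>dx i p x (t + k)\<bar> \<le> Mf i * k\<^sup>2"
    by metis
  have "\<forall>\<^sub>F k in at 0. \<forall>i. \<bar>dx i p x (t + k)\<bar> \<le> Mf i * k\<^sup>2"
    by (rule eventually_all_finite) (rule Mf)
  hence "\<forall>\<^sub>F k in at 0. norm (norm (grad p x (t + k))) \<le> (\<Sum>i\<in>UNIV. Mf i) * norm (k\<^sup>2)"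
  proof (rule eventually_mono)
    fix k assume H: "\<forall>i. \<bar>dx i p x (t + k)\<bar> \<le> Mf i * k\<^sup>2"
    have "norm (grad p x (t + k)) \<le> (\<Sum>i\<in>UNIV. \<bar>grad p x (t + k) $ i\<bar>)" by (rule norm_le_l1_cart)
    also have "\<dots> = (\<Sum>i\<in>UNIV. \<bar>dx i p x (t + k)\<bar>)" unfolding grad_def by simp
    also have "\<dots> \<le> (\<Sum>i\<in>UNIV. Mf i * k\<^sup>2)" by (rule sum_mono) (use H in blast)
    also have "\<dots> = (\<Sum>i\<in>UNIV. Mf i) * norm (k\<^sup>2)" by (simp add: sum_distrib_right)
    finally show "norm (norm (grad p x (t + k))) \<le> (\<Sum>i\<in>UNIV. Mf i) * norm (k\<^sup>2)" by simp
  qed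
  hence B: "(\<lambda>h. norm (grad p x (t + h))) \<in> O[at 0](\<lambda>h. h\<^sup>2)" by (rule bigoI)
  show "(\<lambda>h. div_field u x (t + h)) \<in> O[at 0](\<lambda>h. h)
            \<and> (\<lambda>h. norm (grad p x (t + h))) \<in> O[at 0](\<lambda>h. h\<^sup>2)" using A B by blast
qed

end
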